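(* Let $d\ge1$, $\nu>0$, $\sigma>0$, $a_1>0$, $a_2>0$. Let $\mathbf{X}$ be a centered Gaussian random vector in $\mathbb{R}^d$ with covariance $\sigma^2 I_d$ and $\mathbf{T}$ an independent random vector with Student density $f_\nu(\mathbf{t})=\frac{\Gamma(\nu+\frac d2)}{\Gamma(\nu)\pi^{d/2}}(1+\Vert\mathbf{t}\Vert^2)^{-\nu-\frac d2}$. Set $\tilde\gamma=\frac{a_2}{\sigma\sqrt2\,a_1}$. Then the density of $\tilde{\mathbf{Z}}=a_1\mathbf{X}+a_2\mathbf{T}$ is \[ f_{\tilde{\mathbf{Z}}}(\mathbf{z})=\sum_{k=0}^\infty \alpha_k^{(\nu,\tilde\gamma)}\,g_{k,a_1\sigma}(\mathbf{z}), \] with positive coefficients $\alpha_k^{(\nu,\tilde\gamma)}$ summing to $1$.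
   Context: For $k\in\mathbb{N}$ and $s>0$, $g_{k,s}(\mathbf{z})=\frac{\Gamma(\frac d2)}{\Gamma(k+\frac d2)(s\sqrt{2\pi})^d}\left(\frac{\Vert\mathbf{z}\Vert^2}{2s^2}\right)^k\exp\left(-\frac{\Vert\mathbf{z}\Vert^2}{2s^2}\right)$, $\mathbf{z}\in\mathbb{R}^d$. For $\gamma>0$, $\alpha_k^{(\nu,\gamma)}=\frac{\Gamma(k+\frac d2)}{k!\,\Gamma(\frac d2)\Gamma(\nu)}\gamma^{2k}\int_0^{\infty}e^{-a}a^{\nu+\frac d2-1}(a+\gamma^2)^{-k-\frac d2}\,da$. *)

theory Defs
  imports "HOL-Probability.Probability"
begin

text \<open>Dimension d is DIM('a) for the Euclidean space 'a (so d >= 1 automatically).\<close>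

definition gauss_density :: "real \<Rightarrow> 'a::euclidean_space \<Rightarrow> real" where
  "gauss_density \<sigma> x =
     exp (- (norm x)\<^sup>2 / (2 * \<sigma>\<^sup>2)) / (\<sigma> * sqrt (2 * pi)) ^ DIM('a)"

definition student_density :: "real \<Rightarrow> 'a::euclidean_space \<Rightarrow> real" where
  "student_density \<nu> t =
     Gamma (\<nu> + real DIM('a) / 2) / (Gamma \<nu> * pi powr (real DIM('a) / 2))
     * (1 + (norm t)\<^sup>2) powr (- \<nu> - real DIM('a) / 2)"

definition gk :: "nat \<Rightarrow> real \<Rightarrow> 'a::euclidean_space \<Rightarrow> real" where
  "gk k s z =
     Gamma (real DIM('a) / 2) / (Gamma (real k + real DIM('a) / 2) * (s * sqrt (2 * pi)) ^ DIM('a))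
     * ((norm z)\<^sup>2 / (2 * s\<^sup>2)) ^ k * exp (- (norm z)\<^sup>2 / (2 * s\<^sup>2))"

definition alpha :: "nat \<Rightarrow> real \<Rightarrow> real \<Rightarrow> nat \<Rightarrow> real" where
  "alpha d \<nu> \<gamma> k =
     Gamma (real k + real d / 2) / (fact k * Gamma (real d / 2) * Gamma \<nu>) * \<gamma> ^ (2 * k)
     * (LINT a:{0<..}|lborel. exp (- a) * a powr (\<nu> + real d / 2 - 1)
                                * (a + \<gamma>\<^sup>2) powr (- real k - real d / 2))"

end

theory Submission
  imports Defs "HOL-Analysis.Analysis"
begin

lemma gamma_scaled:
  fixes x l :: real assumes x: "x > 0" and l: "l > 0"
  shows "(\<integral>\<^sup>+a. ennreal (indicator {0<..} a * a powr (x - 1) * exp (- (l * a))) \<partial>lborel)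
         = ennreal (Gamma x / l powr x)"
proof -
  define I where "I = (\<integral>\<^sup>+a. ennreal (indicator {0<..} a * a powr (x - 1) * exp (- (l * a))) \<partial>lborel)"
  have "ennreal (Gamma x) = (\<integral>\<^sup>+t. ennreal (indicator {0..} t * t powr (x - 1) / exp t) \<partial>lborel)"
    using Gamma_conv_nn_integral_real[OF x] .
  also have "\<dots> = ennreal l * (\<integral>\<^sup>+a. ennreal (indicator {0..} (0 + l * a) * (0 + l * a) powr (x - 1) / exp (0 + l * a)) \<partial>lborel)"
    using l by (subst nn_integral_real_affine[where c=l and t=0]) auto
  also have "(\<integral>\<^sup>+a. ennreal (indicator {0..} (0 + l * a) * (0 + l * a) powr (x - 1) / exp (0 + l * a)) \<partial>lborel)
      = (\<integral>\<^sup>+a. ennreal (l powr (x - 1)) * ennreal (indicator {0<..} a * a powr (x - 1) * exp (- (l * a))) \<partial>lborel)"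
  proof (intro nn_integral_cong)
    fix a :: real
    show "ennreal (indicator {0..} (0 + l * a) * (0 + l * a) powr (x - 1) / exp (0 + l * a)) =
          ennreal (l powr (x - 1)) * ennreal (indicator {0<..} a * a powr (x - 1) * exp (- (l * a)))"
    proof (cases "a > 0")
      case True
      then show ?thesis using l
        by (subst ennreal_mult[symmetric]) (auto simp: powr_mult exp_minus field_simps indicator_def)
    next
      case False
      show ?thesis
      proof (cases "a = 0")
        case False
        with \<open>\<not> a > 0\<close> have "a < 0" by simp
        then have "l * a < 0" using l by (simp add: mult_pos_neg)
        then show ?thesis using \<open>a < 0\<close> by (auto simp: indicator_def)
      qed (auto simp: indicator_def)
    qed
  qed
  also have "\<dots> = ennreal (l powr (x - 1)) * I"
    unfolding I_def by (rule nn_integral_cmult) auto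
  finally have "ennreal (Gamma x) = (ennreal l * ennreal (l powr (x - 1))) * I"
    by (simp add: mult.assoc)
  moreover have "ennreal l * ennreal (l powr (x - 1)) = ennreal (l powr x)"
    using l by (simp add: ennreal_mult[symmetric] powr_mult_base)
  ultimately have eq: "ennreal (Gamma x) = ennreal (l powr x) * I" by simp
  have "ennreal (Gamma x / l powr x) = ennreal (1 / l powr x) * ennreal (Gamma x)"
    using l Gamma_real_pos[OF x] by (subst ennreal_mult[symmetric]) auto
  also have "\<dots> = (ennreal (1 / l powr x) * ennreal (l powr x)) * I"
    by (simp add: eq mult.assoc)
  also have "ennreal (1 / l powr x) * ennreal (l powr x) = 1"
    using l by (subst ennreal_mult[symmetric]) auto
  finally show ?thesis unfolding I_def by simp
qed

lemma negbin_sums: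
  fixes p c :: real assumes p: "0 \<le> p" "p < 1" and c: "c > 0"
  shows "(\<lambda>k. Gamma (real k + c) / (fact k * Gamma c) * p ^ k) sums (1 - p) powr (- c)"
proof -
  have "(\<lambda>k. ((- c) gchoose k) * (- p) ^ k) sums (1 + (- p)) powr (- c)"
    by (rule gen_binomial_real) (use p in auto)
  moreover have "((- c) gchoose k) * (- p) ^ k = Gamma (real k + c) / (fact k * Gamma c) * p ^ k" for k
  proof -
    have nz: "c \<notin> \<int>\<^sub>\<le>\<^sub>0" using c by (auto elim!: nonpos_Ints_cases)
    have g: "((- c) gchoose k) = (-1)^k * pochhammer c k / fact k" by (simp add: gbinomial_pochhammer)
    have m: "(-p)^k = (-1)^k * p^k" by (rule power_minus)
    have s: "(-1::real)^k * (-1)^k = 1" by (simp flip: power_add)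
    have "((- c) gchoose k) * (- p) ^ k = ((-1)^k * (-1)^k) * (pochhammer c k / fact k) * p ^ k"
      unfolding g m by (simp only: mult_ac times_divide_eq_right times_divide_eq_left)
    also have "\<dots> = pochhammer c k / fact k * p ^ k" by (simp only: s mult_1_left)
    also have "pochhammer c k = Gamma (real k + c) / Gamma c"
      using pochhammer_Gamma[OF nz, of k] by (simp add: add.commute)
    finally show ?thesis by simp
  qed
  ultimately show ?thesis by simp
qed


lemma nn_integral_affine_eucl:
  fixes f :: "'a::euclidean_space \<Rightarrow> ennreal" and c :: real
  assumes [measurable]: "f \<in> borel_measurable borel" and c: "c \<noteq> 0"
  shows "(\<integral>\<^sup>+x. f x \<partial>lborel) = ennreal (\<bar>c\<bar> ^ DIM('a)) * (\<integral>\<^sup>+x. f (t + c *\<^sub>R x) \<partial>lborel)"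
  by (subst lborel_affine[OF c, of t]) (simp add: nn_integral_density nn_integral_distr nn_integral_cmult ennreal_power)

lemma ennreal_solve:
  assumes "(0::real) < a" "ennreal a * J = 1"
  shows "J = ennreal (1 / a)"
proof -
  have "J = (ennreal (1/a) * ennreal a) * J"
    using assms(1) by (simp add: ennreal_mult[symmetric])
  also have "\<dots> = ennreal (1/a)" using assms(2) by (simp add: mult.assoc)
  finally show ?thesis .
qed

lemma gauss_int:
  fixes \<sigma> c :: real
  assumes s: "\<sigma> > 0" and c: "c > 0"
    and one: "(\<integral>\<^sup>+x. ennreal (gauss_density \<sigma> (x::'a::euclidean_space)) \<partial>lborel) = 1"
  shows "(\<integral>\<^sup>+y. ennreal (exp (- c * (norm (y::'a))\<^sup>2)) \<partial>lborel) = ennreal (sqrt (pi / c) ^ DIM('a))"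
proof -
  define l where "l = \<sigma> * sqrt (2 * c)"
  define K where "K = (\<sigma> * sqrt (2 * pi)) ^ DIM('a)"
  have l: "l > 0" using s c by (simp add: l_def)
  have K: "K > 0" using s by (simp add: K_def)
  have "1 = ennreal (\<bar>l\<bar> ^ DIM('a)) * (\<integral>\<^sup>+y. ennreal (gauss_density \<sigma> (0 + l *\<^sub>R (y::'a))) \<partial>lborel)"
    unfolding one[symmetric] using l
    by (intro nn_integral_affine_eucl) (auto simp: gauss_density_def)
  also have "(\<lambda>y::'a. ennreal (gauss_density \<sigma> (0 + l *\<^sub>R y))) = (\<lambda>y. ennreal (1 / K) * ennreal (exp (- c * (norm y)\<^sup>2)))"
  proof
    fix y :: 'a
    have n1: "(norm (l *\<^sub>R y))\<^sup>2 = l\<^sup>2 * (norm y)\<^sup>2" by (simp add: power_mult_distrib)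
    have n2: "l\<^sup>2 = \<sigma>\<^sup>2 * (2 * c)" using c by (simp add: l_def power_mult_distrib)
    have "- (norm (l *\<^sub>R y))\<^sup>2 / (2 * \<sigma>\<^sup>2) = - c * (norm y)\<^sup>2"
      unfolding n1 n2 using s by simp
    then have "gauss_density \<sigma> (0 + l *\<^sub>R y) = exp (- c * (norm y)\<^sup>2) / K"
      unfolding gauss_density_def K_def by (simp only: add_0_left)
    also have "\<dots> = (1 / K) * exp (- c * (norm y)\<^sup>2)" by simp
    finally show "ennreal (gauss_density \<sigma> (0 + l *\<^sub>R y)) = ennreal (1 / K) * ennreal (exp (- c * (norm y)\<^sup>2))"
      using K by (simp add: ennreal_mult[symmetric])
  qed
  also have "(\<integral>\<^sup>+y. ennreal (1 / K) * ennreal (exp (- c * (norm (y::'a))\<^sup>2)) \<partial>lborel)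
      = ennreal (1 / K) * (\<integral>\<^sup>+y. ennreal (exp (- c * (norm (y::'a))\<^sup>2)) \<partial>lborel)"
    by (rule nn_integral_cmult) auto
  finally have c1: "1 = ennreal (\<bar>l\<bar> ^ DIM('a)) * (ennreal (1 / K) * (\<integral>\<^sup>+y. ennreal (exp (- c * (norm (y::'a))\<^sup>2)) \<partial>lborel))" .
  have m: "ennreal (\<bar>l\<bar> ^ DIM('a)) * ennreal (1 / K) = ennreal (l ^ DIM('a) / K)"
    using l K by (simp add: ennreal_mult[symmetric])
  have "ennreal (l ^ DIM('a) / K) * (\<integral>\<^sup>+y. ennreal (exp (- c * (norm (y::'a))\<^sup>2)) \<partial>lborel) = 1"
    using c1 m by (metis mult.assoc)
  then have "(\<integral>\<^sup>+y. ennreal (exp (- c * (norm (y::'a))\<^sup>2)) \<partial>lborel) = ennreal (1 / (l ^ DIM('a) / K))"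
    by (rule ennreal_solve[rotated]) (use l K in simp)
  also have "1 / (l ^ DIM('a) / K) = sqrt (pi / c) ^ DIM('a)"
  proof -
    have "(\<sigma> * sqrt (2 * pi)) / l = sqrt (2 * pi) / sqrt (2 * c)" using s by (simp add: l_def)
    also have "\<dots> = sqrt (pi / c)" by (simp add: real_sqrt_divide[symmetric])
    finally have "sqrt (pi / c) = (\<sigma> * sqrt (2 * pi)) / l" by simp
    then show ?thesis by (simp add: K_def power_divide)
  qed
  finally show ?thesis .
qed

lemma complete_sq:
  fixes z t :: "'a::real_inner" and a q b :: real
  assumes a: "a > 0" and q: "q > 0"
  shows "a * (norm t)\<^sup>2 + q * (norm (z - b *\<^sub>R t))\<^sup>2 =
    (a + q * b\<^sup>2) * (norm (t - ((q * b) / (a + q * b\<^sup>2)) *\<^sub>R z))\<^sup>2 + q * a / (a + q * b\<^sup>2) * (norm z)\<^sup>2"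
proof -
  define A where "A = a + q * b\<^sup>2"
  have A: "A > 0" using a q by (simp add: A_def add_pos_nonneg)
  define u where "u = t \<bullet> t"
  define v where "v = z \<bullet> t"
  define w where "w = z \<bullet> z"
  have e1: "(norm (z - b *\<^sub>R t))\<^sup>2 = w - 2 * b * v + b\<^sup>2 * u"
    by (simp only: power2_norm_eq_inner) (simp add: inner_diff_left inner_diff_right u_def v_def w_def inner_commute power2_eq_square algebra_simps)
  have e2: "(norm (t - ((q * b) / A) *\<^sub>R z))\<^sup>2 = u - 2 * ((q * b) / A) * v + ((q * b) / A)\<^sup>2 * w"
    by (simp only: power2_norm_eq_inner) (simp add: inner_diff_left inner_diff_right u_def v_def w_def inner_commute power2_eq_square algebra_simps)
  have e3: "(norm t)\<^sup>2 = u" "(norm z)\<^sup>2 = w" by (simp_all add: power2_norm_eq_inner u_def w_def)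
  have t1: "A * (2 * ((q * b) / A) * v) = 2 * q * b * v" using A by simp
  have t2: "A * (((q * b) / A)\<^sup>2 * w) = (q * b)\<^sup>2 / A * w" using A by (simp add: power2_eq_square)
  have s1: "A * (u - 2 * ((q * b) / A) * v + ((q * b) / A)\<^sup>2 * w) = A * u - 2 * q * b * v + (q * b)\<^sup>2 / A * w"
    by (simp only: right_diff_distrib distrib_left t1 t2)
  have s2: "(q * b)\<^sup>2 / A * w + q * a / A * w = q * w"
  proof -
    have "(q * b)\<^sup>2 / A * w + q * a / A * w = q * w * ((q * b\<^sup>2 + a) / A)"
      by (simp add: power2_eq_square algebra_simps add_divide_distrib)
    also have "(q * b\<^sup>2 + a) / A = 1" using A by (simp add: A_def add.commute)
    finally show ?thesis by simp
  qed
  have key: "A * (u - 2 * ((q * b) / A) * v + ((q * b) / A)\<^sup>2 * w) + q * a / A * w = A * u - 2 * q * b * v + q * w"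
    using s1 s2 by simp
  have "a * (norm t)\<^sup>2 + q * (norm (z - b *\<^sub>R t))\<^sup>2 = A * u - 2 * q * b * v + q * w"
    unfolding e1 e3 A_def by (simp add: algebra_simps)
  also have "\<dots> = A * (norm (t - ((q * b) / A) *\<^sub>R z))\<^sup>2 + q * a / A * (norm z)\<^sup>2"
    unfolding e2 e3 using key by simp
  finally show ?thesis by (simp only: A_def)
qed


lemma gauss_density_meas[measurable]: "gauss_density s \<in> borel_measurable borel"
  unfolding gauss_density_def[abs_def] by measurable

lemma student_density_meas[measurable]: "student_density n \<in> borel_measurable borel"
  unfolding student_density_def[abs_def] by measurable

lemma sqrt_pow_powr: "y > 0 \<Longrightarrow> sqrt y ^ n = y powr (real n / 2)"
  by (simp add: powr_half_sqrt[symmetric] powr_realpow[symmetric] powr_powr)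

lemma conv_gauss:
  fixes z :: "'a::euclidean_space" and a q b :: real
  assumes a: "a > 0" and q: "q > 0"
    and GI: "\<And>c. c > 0 \<Longrightarrow> (\<integral>\<^sup>+y. ennreal (exp (- c * (norm (y::'a))\<^sup>2)) \<partial>lborel) = ennreal (sqrt (pi / c) ^ DIM('a))"
  shows "(\<integral>\<^sup>+t. ennreal (exp (- a * (norm t)\<^sup>2) * exp (- q * (norm (z - b *\<^sub>R t))\<^sup>2)) \<partial>lborel)
     = ennreal (sqrt (pi / (a + q * b\<^sup>2)) ^ DIM('a) * exp (- (q * a / (a + q * b\<^sup>2)) * (norm z)\<^sup>2))"
proof -
  define A where "A = a + q * b\<^sup>2"
  define w where "w = ((q * b) / A) *\<^sub>R z"
  have A: "A > 0" using a q by (simp add: A_def add_pos_nonneg)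
  have eq: "exp (- a * (norm t)\<^sup>2) * exp (- q * (norm (z - b *\<^sub>R t))\<^sup>2)
      = exp (- A * (norm (t - w))\<^sup>2) * exp (- (q * a / A) * (norm z)\<^sup>2)" for t :: 'a
  proof -
    have "- a * (norm t)\<^sup>2 + - q * (norm (z - b *\<^sub>R t))\<^sup>2 = - A * (norm (t - w))\<^sup>2 + - (q * a / A) * (norm z)\<^sup>2"
      using complete_sq[OF a q, of t z b] unfolding A_def[symmetric] w_def by simp
    then show ?thesis by (simp flip: exp_add)
  qed
  have "(\<integral>\<^sup>+t. ennreal (exp (- a * (norm t)\<^sup>2) * exp (- q * (norm (z - b *\<^sub>R t))\<^sup>2)) \<partial>lborel)
      = (\<integral>\<^sup>+t. ennreal (exp (- A * (norm (t - w))\<^sup>2)) * ennreal (exp (- (q * a / A) * (norm z)\<^sup>2)) \<partial>lborel)"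
    by (intro nn_integral_cong) (simp only: eq, rule ennreal_mult, simp_all)
  also have "\<dots> = (\<integral>\<^sup>+t. ennreal (exp (- A * (norm (t - w))\<^sup>2)) \<partial>lborel) * ennreal (exp (- (q * a / A) * (norm z)\<^sup>2))"
    by (rule nn_integral_multc) auto
  also have "(\<integral>\<^sup>+t. ennreal (exp (- A * (norm (t - w))\<^sup>2)) \<partial>lborel)
      = ennreal (\<bar>1\<bar> ^ DIM('a)) * (\<integral>\<^sup>+t. ennreal (exp (- A * (norm (w + 1 *\<^sub>R t - w))\<^sup>2)) \<partial>lborel)"
    by (rule nn_integral_affine_eucl) auto
  also have "\<dots> = ennreal (sqrt (pi / A) ^ DIM('a))"
    using GI[OF A] by simp
  finally have fin: "(\<integral>\<^sup>+t. ennreal (exp (- a * (norm t)\<^sup>2) * exp (- q * (norm (z - b *\<^sub>R t))\<^sup>2)) \<partial>lborel)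
      = ennreal (sqrt (pi / A) ^ DIM('a)) * ennreal (exp (- (q * a / A) * (norm z)\<^sup>2))" .
  have "ennreal (sqrt (pi / A) ^ DIM('a)) * ennreal (exp (- (q * a / A) * (norm z)\<^sup>2))
     = ennreal (sqrt (pi / A) ^ DIM('a) * exp (- (q * a / A) * (norm z)\<^sup>2))"
    using A by (intro ennreal_mult[symmetric]) (simp_all add: less_imp_le)
  with fin show ?thesis unfolding A_def by (rule trans)
qed

lemma student_rep:
  fixes t :: "'a::euclidean_space" and \<nu> :: real
  assumes nu: "\<nu> > 0"
  defines "x \<equiv> \<nu> + real DIM('a) / 2"
  defines "C \<equiv> 1 / (Gamma \<nu> * pi powr (real DIM('a) / 2))"
  shows "ennreal (student_density \<nu> t) =
    (\<integral>\<^sup>+a. ennreal (C * (indicator {0<..} a * a powr (x - 1) * exp (- a)) * exp (- a * (norm t)\<^sup>2)) \<partial>lborel)"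
proof -
  have x: "x > 0" using nu by (simp add: x_def add_pos_nonneg)
  have C: "C > 0" using nu by (simp add: C_def Gamma_real_pos)
  define l where "l = 1 + (norm t)\<^sup>2"
  have l: "l > 0" by (simp add: l_def add_pos_nonneg)
  have "(\<integral>\<^sup>+a. ennreal (C * (indicator {0<..} a * a powr (x - 1) * exp (- a)) * exp (- a * (norm t)\<^sup>2)) \<partial>lborel)
     = (\<integral>\<^sup>+a. ennreal C * ennreal (indicator {0<..} a * a powr (x - 1) * exp (- (l * a))) \<partial>lborel)"
  proof (intro nn_integral_cong)
    fix a :: real
    have "exp (- a) * exp (- a * (norm t)\<^sup>2) = exp (- (l * a))"
      by (simp add: l_def algebra_simps flip: exp_add)
    then show "ennreal (C * (indicator {0<..} a * a powr (x - 1) * exp (- a)) * exp (- a * (norm t)\<^sup>2)) =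
        ennreal C * ennreal (indicator {0<..} a * a powr (x - 1) * exp (- (l * a)))"
      using C by (simp add: ennreal_mult[symmetric] mult.assoc)
  qed
  also have "\<dots> = ennreal C * ennreal (Gamma x / l powr x)"
    by (subst nn_integral_cmult) (auto simp: gamma_scaled[OF x l])
  also have "\<dots> = ennreal (C * (Gamma x / l powr x))"
    using C l x Gamma_real_pos[OF x] by (subst ennreal_mult[symmetric]) auto
  also have "C * (Gamma x / l powr x) = student_density \<nu> t"
  proof -
    have e1: "- \<nu> - real DIM('a) / 2 = - x" by (simp add: x_def)
    have "student_density \<nu> t = Gamma x / (Gamma \<nu> * pi powr (real DIM('a) / 2)) * (l powr (- x))"
      unfolding student_density_def e1 by (simp add: x_def l_def)
    also have "\<dots> = C * (Gamma x / l powr x)"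
      by (simp add: C_def powr_minus_divide)
    finally show ?thesis by simp
  qed
  finally show ?thesis by simp
qed


lemma Ik:
  fixes x g e :: real
  assumes x: "x > 0" and g: "g > 0" and e: "e \<le> 0"
  shows "(\<integral>\<^sup>+a. ennreal (indicator {0<..} a * (exp (- a) * a powr (x - 1) * (a + g) powr e)) \<partial>lborel)
           = ennreal (LINT a:{0<..}|lborel. exp (- a) * a powr (x - 1) * (a + g) powr e)"
    and "(LINT a:{0<..}|lborel. exp (- a) * a powr (x - 1) * (a + g) powr e) > 0"
proof -
  define F where "F = (\<lambda>a::real. indicator {0<..} a * (exp (- a) * a powr (x - 1) * (a + g) powr e))"
  have Fnn: "F a \<ge> 0" for a by (simp add: F_def)
  have Fm[measurable]: "F \<in> borel_measurable borel" unfolding F_def by measurable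
  have bound: "F a \<le> g powr e * (indicator {0<..} a * a powr (x - 1) * exp (- (1 * a)))" for a
  proof (cases "a > 0")
    case True
    have "(a + g) powr e \<le> g powr e" using True g e by (intro powr_mono2') auto
    then show ?thesis using True by (simp add: F_def mult_left_mono mult_ac)
  qed (simp add: F_def)
  have "(\<integral>\<^sup>+a. ennreal (F a) \<partial>lborel) \<le> (\<integral>\<^sup>+a. ennreal (g powr e) * ennreal (indicator {0<..} a * a powr (x - 1) * exp (- (1 * a))) \<partial>lborel)"
    using bound by (intro nn_integral_mono) (simp add: ennreal_mult[symmetric])
  also have "\<dots> = ennreal (g powr e) * ennreal (Gamma x / 1 powr x)"
    using gamma_scaled[OF x, of 1] by (subst nn_integral_cmult) auto
  also have "\<dots> < \<infinity>" by (simp add: ennreal_mult_less_top)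
  finally have fin: "(\<integral>\<^sup>+a. ennreal (F a) \<partial>lborel) < \<infinity>" .
  have int: "integrable lborel F"
    by (rule integrableI_bounded) (use fin Fnn in simp_all)
  have eqI: "(LINT a:{0<..}|lborel. exp (- a) * a powr (x - 1) * (a + g) powr e) = integral\<^sup>L lborel F"
    unfolding set_lebesgue_integral_def F_def by simp
  have nn: "(\<integral>\<^sup>+a. ennreal (F a) \<partial>lborel) = ennreal (integral\<^sup>L lborel F)"
    by (rule nn_integral_eq_integral[OF int]) (simp add: Fnn)
  then show "(\<integral>\<^sup>+a. ennreal (indicator {0<..} a * (exp (- a) * a powr (x - 1) * (a + g) powr e)) \<partial>lborel)
           = ennreal (LINT a:{0<..}|lborel. exp (- a) * a powr (x - 1) * (a + g) powr e)"
    unfolding eqI by (simp add: F_def)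
  have "{0<..<1} \<subseteq> {a \<in> space lborel. ennreal (F a) \<noteq> 0}"
    using g by (auto simp: F_def)
  then have "emeasure lborel {0<..<(1::real)} \<le> emeasure lborel {a \<in> space lborel. ennreal (F a) \<noteq> 0}"
    by (intro emeasure_mono) auto
  then have "emeasure lborel {a \<in> space lborel. ennreal (F a) \<noteq> 0} \<noteq> 0" by auto
  then have "(\<integral>\<^sup>+a. ennreal (F a) \<partial>lborel) \<noteq> 0"
    by (subst nn_integral_0_iff) auto
  then have "integral\<^sup>L lborel F \<noteq> 0" using nn by auto
  moreover have "integral\<^sup>L lborel F \<ge> 0" by (simp add: Fnn)
  ultimately show "(LINT a:{0<..}|lborel. exp (- a) * a powr (x - 1) * (a + g) powr e) > 0"
    unfolding eqI by simp
qed


lemma h_series: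
  fixes z :: "'a::euclidean_space" and \<nu> s b :: real
  assumes nu: "\<nu> > 0" and s: "s > 0" and b: "b > 0"
    and GI: "\<And>c. c > 0 \<Longrightarrow> (\<integral>\<^sup>+y. ennreal (exp (- c * (norm (y::'a))\<^sup>2)) \<partial>lborel) = ennreal (sqrt (pi / c) ^ DIM('a))"
  defines "\<gamma> \<equiv> b / (s * sqrt 2)"
  shows "(\<integral>\<^sup>+t. ennreal (student_density \<nu> t) * ennreal (gauss_density s (z - b *\<^sub>R t)) \<partial>lborel)
       = (\<Sum>k. ennreal (alpha DIM('a) \<nu> \<gamma> k * gk k s z))"
proof -
  define dr where "dr = real DIM('a)"
  define x where "x = \<nu> + dr / 2"
  define C where "C = 1 / (Gamma \<nu> * pi powr (dr / 2))"
  define K where "K = (s * sqrt (2 * pi)) ^ DIM('a)"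
  define q where "q = 1 / (2 * s\<^sup>2)"
  define g where "g = \<gamma>\<^sup>2"
  define r where "r = (norm z)\<^sup>2 / (2 * s\<^sup>2)"
  have x: "x > 0" using nu by (simp add: x_def dr_def add_pos_nonneg)
  have C: "C > 0" using nu by (simp add: C_def Gamma_real_pos)
  have K: "K > 0" using s by (simp add: K_def)
  have q: "q > 0" using s by (simp add: q_def)
  have g: "g > 0" using s b by (simp add: g_def \<gamma>_def)
  have r: "r \<ge> 0" by (simp add: r_def)
  have qb: "q * b\<^sup>2 = g"
    using s by (simp add: q_def g_def \<gamma>_def power_divide power_mult_distrib)
  have rq: "r = q * (norm z)\<^sup>2" by (simp add: r_def q_def)
  have G: "gauss_density s y = (1 / K) * exp (- q * (norm y)\<^sup>2)" for y :: 'a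
    by (simp add: gauss_density_def K_def q_def)
  define c0 where "c0 = (\<lambda>a::real. C * (indicator {0<..} a * a powr (x - 1) * exp (- a)) / K)"
  have c0: "c0 a \<ge> 0" for a using C K by (simp add: c0_def)
  define P where "P = (\<lambda>a. c0 a * (sqrt (pi / (a + g)) ^ DIM('a) * exp (- (q * a / (a + g)) * (norm z)\<^sup>2)))"
  define T where "T = (\<lambda>k a. c0 a * pi powr (dr / 2) * exp (- r) * (r * g) ^ k / fact k * (a + g) powr (- real k - dr / 2))"
  have Tnn: "T k a \<ge> 0" for k a using c0 r g by (simp add: T_def)

  have S: "ennreal (student_density \<nu> t) =
    (\<integral>\<^sup>+a. ennreal (C * (indicator {0<..} a * a powr (x - 1) * exp (- a)) * exp (- a * (norm t)\<^sup>2)) \<partial>lborel)" for t :: 'a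
    using student_rep[OF nu, of t] unfolding x_def C_def dr_def .
  have "(\<integral>\<^sup>+t. ennreal (student_density \<nu> t) * ennreal (gauss_density s (z - b *\<^sub>R t)) \<partial>lborel)
     = (\<integral>\<^sup>+t. (\<integral>\<^sup>+a. ennreal (C * (indicator {0<..} a * a powr (x - 1) * exp (- a)) * exp (- a * (norm t)\<^sup>2))
            * ennreal (gauss_density s (z - b *\<^sub>R t)) \<partial>lborel) \<partial>lborel)"
    unfolding S by (intro nn_integral_cong nn_integral_multc[symmetric]) auto
  also have "\<dots> = (\<integral>\<^sup>+a. (\<integral>\<^sup>+t. ennreal (C * (indicator {0<..} a * a powr (x - 1) * exp (- a)) * exp (- a * (norm t)\<^sup>2))
            * ennreal (gauss_density s (z - b *\<^sub>R t)) \<partial>lborel) \<partial>lborel)"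
    by (rule lborel_pair.Fubini') measurable
  also have "\<dots> = (\<integral>\<^sup>+a. ennreal (P a) \<partial>lborel)"
  proof (intro nn_integral_cong)
    fix a :: real
    have "(\<integral>\<^sup>+t. ennreal (C * (indicator {0<..} a * a powr (x - 1) * exp (- a)) * exp (- a * (norm t)\<^sup>2))
            * ennreal (gauss_density s (z - b *\<^sub>R t)) \<partial>lborel)
        = (\<integral>\<^sup>+t. ennreal (c0 a) * ennreal (exp (- a * (norm t)\<^sup>2) * exp (- q * (norm (z - b *\<^sub>R t))\<^sup>2)) \<partial>lborel)"
    proof (intro nn_integral_cong)
      fix t :: 'a
      show "ennreal (C * (indicator {0<..} a * a powr (x - 1) * exp (- a)) * exp (- a * (norm t)\<^sup>2))
            * ennreal (gauss_density s (z - b *\<^sub>R t))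
          = ennreal (c0 a) * ennreal (exp (- a * (norm t)\<^sup>2) * exp (- q * (norm (z - b *\<^sub>R t))\<^sup>2))"
        using C K c0[of a]
        by (simp add: G c0_def ennreal_mult[symmetric] mult_ac)
    qed
    also have "\<dots> = ennreal (c0 a) * (\<integral>\<^sup>+t. ennreal (exp (- a * (norm t)\<^sup>2) * exp (- q * (norm (z - b *\<^sub>R t))\<^sup>2)) \<partial>lborel)"
      by (rule nn_integral_cmult) auto
    also have "\<dots> = ennreal (P a)"
    proof (cases "a > 0")
      case True
      show ?thesis
        using conv_gauss[OF True q GI, of z b] c0[of a] unfolding qb P_def
        by (simp add: ennreal_mult'[symmetric])
    next
      case False
      then show ?thesis by (simp add: c0_def P_def)
    qed
    finally show "(\<integral>\<^sup>+t. ennreal (C * (indicator {0<..} a * a powr (x - 1) * exp (- a)) * exp (- a * (norm t)\<^sup>2))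
            * ennreal (gauss_density s (z - b *\<^sub>R t)) \<partial>lborel) = ennreal (P a)" .
  qed
  finally have step1: "(\<integral>\<^sup>+t. ennreal (student_density \<nu> t) * ennreal (gauss_density s (z - b *\<^sub>R t)) \<partial>lborel)
     = (\<integral>\<^sup>+a. ennreal (P a) \<partial>lborel)" .
  have sumsP: "(\<lambda>k. T k a) sums P a" for a
  proof (cases "a > 0")
    case True
    define y where "y = r * g / (a + g)"
    have A: "a + g > 0" using True g by simp
    have e1: "exp (- (q * a / (a + g)) * (norm z)\<^sup>2) = exp (- r) * exp y"
    proof -
      have "- (q * a / (a + g)) * (norm z)\<^sup>2 = - r + y"
        unfolding rq y_def using A by (simp add: field_simps)
      then show ?thesis by (metis exp_add)
    qed
    have e2: "sqrt (pi / (a + g)) ^ DIM('a) = pi powr (dr / 2) * (a + g) powr (- dr / 2)"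
      using sqrt_pow_powr[of "pi / (a + g)" "DIM('a)"] A
      by (simp add: powr_divide powr_minus_divide dr_def)
    have e3: "y ^ k = (r * g) ^ k * (a + g) powr (- real k)" for k
      using A by (simp add: y_def power_divide powr_minus_divide powr_realpow)
    have e4: "(a + g) powr (- real k - dr / 2) = (a + g) powr (- dr / 2) * (a + g) powr (- real k)" for k
    proof -
      have "- real k - dr / 2 = (- dr / 2) + (- real k)" by simp
      then show ?thesis by (simp only: powr_add)
    qed
    define Mc where "Mc = c0 a * pi powr (dr / 2) * exp (- r) * (a + g) powr (- dr / 2)"
    have PM: "P a = Mc * exp y" unfolding P_def Mc_def e1 e2 by (simp only: mult_ac)
    have TM: "T k a = Mc * (y ^ k /\<^sub>R fact k)" for k
      unfolding T_def Mc_def e3 e4 by (simp only: real_scaleR_def divide_inverse mult_ac)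
    show ?thesis unfolding PM TM by (intro sums_mult exp_converges)
  next
    case False
    then have "c0 a = 0" by (simp add: c0_def)
    then show ?thesis by (simp add: T_def P_def)
  qed
  have Pser: "ennreal (P a) = (\<Sum>k. ennreal (T k a))" for a
    using suminf_ennreal_eq[OF Tnn sumsP] by simp
  have Tm[measurable]: "(\<lambda>a. ennreal (T k a)) \<in> borel_measurable lborel" for k
    unfolding T_def c0_def by measurable
  have step2: "(\<integral>\<^sup>+a. ennreal (P a) \<partial>lborel) = (\<Sum>k. (\<integral>\<^sup>+a. ennreal (T k a) \<partial>lborel))"
    unfolding Pser by (rule nn_integral_suminf) measurable
  have step3: "(\<integral>\<^sup>+a. ennreal (T k a) \<partial>lborel) = ennreal (alpha DIM('a) \<nu> \<gamma> k * gk k s z)" for k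
  proof -
    define Dk where "Dk = C / K * pi powr (dr / 2) * exp (- r) * (r * g) ^ k / fact k"
    define L where "L = (LINT a:{0<..}|lborel. exp (- a) * a powr (x - 1) * (a + g) powr (- real k - dr / 2))"
    have Dk: "Dk \<ge> 0" using C K r g by (simp add: Dk_def)
    have "(\<integral>\<^sup>+a. ennreal (T k a) \<partial>lborel)
        = (\<integral>\<^sup>+a. ennreal Dk * ennreal (indicator {0<..} a * (exp (- a) * a powr (x - 1) * (a + g) powr (- real k - dr / 2))) \<partial>lborel)"
    proof (intro nn_integral_cong)
      fix a :: real
      show "ennreal (T k a) = ennreal Dk * ennreal (indicator {0<..} a * (exp (- a) * a powr (x - 1) * (a + g) powr (- real k - dr / 2)))"
        using Dk by (subst ennreal_mult[symmetric]) (auto simp: T_def c0_def Dk_def mult_ac)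
    qed
    also have "\<dots> = ennreal Dk * ennreal L"
      unfolding L_def using Ik(1)[OF x g, of "- real k - dr / 2"]
      by (subst nn_integral_cmult) (auto simp: dr_def)
    also have "\<dots> = ennreal (Dk * L)" using Dk by (simp add: ennreal_mult')
    also have "Dk * L = alpha DIM('a) \<nu> \<gamma> k * gk k s z"
    proof -
      have L': "L = (LINT a:{0<..}|lborel. exp (- a) * a powr (\<nu> + real DIM('a) / 2 - 1) * (a + \<gamma>\<^sup>2) powr (- real k - real DIM('a) / 2))"
        by (simp add: L_def x_def dr_def g_def)
      have GA: "Gamma (real k + dr / 2) > 0" by (intro Gamma_real_pos) (simp add: dr_def add_nonneg_pos)
      have GD: "Gamma (dr / 2) > 0" by (intro Gamma_real_pos) (simp add: dr_def)
      have GN: "Gamma \<nu> > 0" using nu by (rule Gamma_real_pos)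
      have g2: "\<gamma> ^ (2 * k) = g ^ k" by (simp add: g_def power_mult)
      have ez: "exp (- (norm z)\<^sup>2 / (2 * s\<^sup>2)) = exp (- r)" by (simp add: r_def)
      have "alpha DIM('a) \<nu> \<gamma> k * gk k s z
          = Gamma (real k + dr / 2) / (fact k * Gamma (dr / 2) * Gamma \<nu>) * g ^ k * L
            * (Gamma (dr / 2) / (Gamma (real k + dr / 2) * K) * r ^ k * exp (- r))"
        unfolding alpha_def gk_def L'[symmetric] g2 ez by (simp add: dr_def K_def r_def)
      also have "\<dots> = Dk * L"
        using GA GD GN K
        by (simp add: Dk_def C_def power_mult_distrib field_simps)
      finally show ?thesis by simp
    qed
    finally show ?thesis .
  qed
  show ?thesis unfolding step1 step2 step3 ..
qed


lemma alpha_pos: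
  fixes d :: nat and \<nu> \<gamma> :: real
  assumes d: "d > 0" and nu: "\<nu> > 0" and ga: "\<gamma> > 0"
  shows "alpha d \<nu> \<gamma> k > 0"
proof -
  have x: "\<nu> + real d / 2 > 0" using nu by (simp add: add_pos_nonneg)
  have L: "(LINT a:{0<..}|lborel. exp (- a) * a powr (\<nu> + real d / 2 - 1) * (a + \<gamma>\<^sup>2) powr (- real k - real d / 2)) > 0"
    using Ik(2)[OF x, of "\<gamma>\<^sup>2" "- real k - real d / 2"] ga by simp
  have "Gamma (real k + real d / 2) > 0" using d by (intro Gamma_real_pos) (simp add: add_nonneg_pos)
  moreover have "Gamma (real d / 2) > 0" using d by (intro Gamma_real_pos) simp
  moreover have "Gamma \<nu> > 0" using nu by (rule Gamma_real_pos)
  ultimately show ?thesis unfolding alpha_def using L ga by (simp add: divide_pos_pos)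
qed

lemma alpha_sums:
  fixes d :: nat and \<nu> \<gamma> :: real
  assumes d: "d > 0" and nu: "\<nu> > 0" and ga: "\<gamma> > 0"
  shows "(\<lambda>k. alpha d \<nu> \<gamma> k) sums 1"
proof -
  define x where "x = \<nu> + real d / 2"
  define g where "g = \<gamma>\<^sup>2"
  define dh where "dh = real d / 2"
  have x: "x > 0" using nu by (simp add: x_def add_pos_nonneg)
  have g: "g > 0" using ga by (simp add: g_def)
  have dh: "dh > 0" using d by (simp add: dh_def)
  have GN: "Gamma \<nu> > 0" using nu by (rule Gamma_real_pos)
  have GD: "Gamma dh > 0" using dh by (rule Gamma_real_pos)
  define Ck where "Ck = (\<lambda>k. Gamma (real k + dh) / (fact k * Gamma dh * Gamma \<nu>) * \<gamma> ^ (2 * k))"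
  have Ck: "Ck k \<ge> 0" for k
    using GN GD dh by (simp add: Ck_def add_nonneg_pos less_imp_le[OF Gamma_real_pos] zero_le_mult_iff)
  define f where "f = (\<lambda>k a. Ck k * (indicator {0<..} a * (exp (- a) * a powr (x - 1) * (a + g) powr (- real k - dh))))"
  have fnn: "f k a \<ge> 0" for k a using Ck[of k] by (simp add: f_def)
  have fm[measurable]: "(\<lambda>a. ennreal (f k a)) \<in> borel_measurable lborel" for k
    unfolding f_def by measurable
  have al: "ennreal (alpha d \<nu> \<gamma> k) = (\<integral>\<^sup>+a. ennreal (f k a) \<partial>lborel)" for k
  proof -
    have "(\<integral>\<^sup>+a. ennreal (f k a) \<partial>lborel) = ennreal (Ck k) *
        (\<integral>\<^sup>+a. ennreal (indicator {0<..} a * (exp (- a) * a powr (x - 1) * (a + g) powr (- real k - dh))) \<partial>lborel)"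
      unfolding f_def using Ck[of k] by (subst nn_integral_cmult[symmetric]) (auto simp: ennreal_mult)
    also have "\<dots> = ennreal (Ck k) * ennreal (LINT a:{0<..}|lborel. exp (- a) * a powr (x - 1) * (a + g) powr (- real k - dh))"
      using Ik(1)[OF x g, of "- real k - dh"] dh by simp
    also have "\<dots> = ennreal (alpha d \<nu> \<gamma> k)"
      using Ck[of k] by (simp add: ennreal_mult'[symmetric] alpha_def Ck_def x_def g_def dh_def mult.assoc)
    finally show ?thesis by simp
  qed
  have pt: "(\<Sum>k. ennreal (f k a)) = ennreal (indicator {0<..} a * a powr (\<nu> - 1) * exp (- (1 * a)) / Gamma \<nu>)" for a
  proof (cases "a > 0")
    case True
    define p where "p = g / (a + g)"
    have A: "a + g > 0" using True g by simp
    have p: "0 \<le> p" "p < 1" using True g by (auto simp: p_def)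
    define M where "M = exp (- a) * a powr (x - 1) * (a + g) powr (- dh) / Gamma \<nu>"
    have fk: "f k a = M * (Gamma (real k + dh) / (fact k * Gamma dh) * p ^ k)" for k
    proof -
      have e1: "(a + g) powr (- real k - dh) = (a + g) powr (- dh) * (a + g) powr (- real k)"
      proof -
        have "- real k - dh = (- dh) + (- real k)" by simp
        then show ?thesis by (simp only: powr_add)
      qed
      have e2: "\<gamma> ^ (2 * k) * (a + g) powr (- real k) = p ^ k"
        using A by (simp add: p_def g_def power_mult powr_minus_divide powr_realpow power_divide)
      have "f k a = (exp (- a) * a powr (x - 1) * (a + g) powr (- dh) / Gamma \<nu>) *
                   (Gamma (real k + dh) / (fact k * Gamma dh) * (\<gamma> ^ (2 * k) * (a + g) powr (- real k)))"
        using True unfolding f_def Ck_def e1 by (simp add: field_simps)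
      then show ?thesis unfolding e2 M_def .
    qed
    have "(\<lambda>k. f k a) sums (M * (1 - p) powr (- dh))"
      unfolding fk by (intro sums_mult negbin_sums p dh)
    moreover have "M * (1 - p) powr (- dh) = indicator {0<..} a * a powr (\<nu> - 1) * exp (- (1 * a)) / Gamma \<nu>"
    proof -
      have "1 - p = a / (a + g)" using A by (simp add: p_def field_simps)
      then have "(1 - p) powr (- dh) = a powr (- dh) * (a + g) powr dh"
        using True A by (simp add: powr_divide powr_minus_divide)
      moreover have "(a + g) powr (- dh) * (a + g) powr dh = 1"
        using A by (simp add: powr_add[symmetric])
      moreover have "a powr (x - 1) * a powr (- dh) = a powr (\<nu> - 1)"
        using True by (simp add: powr_add[symmetric] x_def dh_def)
      ultimately show ?thesis using True
        unfolding M_def by (simp add: mult_ac)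
    qed
    ultimately show ?thesis using suminf_ennreal_eq[OF fnn] by simp
  next
    case False
    then show ?thesis by (simp add: f_def)
  qed
  have "(\<Sum>k. ennreal (alpha d \<nu> \<gamma> k)) = (\<Sum>k. (\<integral>\<^sup>+a. ennreal (f k a) \<partial>lborel))"
    unfolding al ..
  also have "\<dots> = (\<integral>\<^sup>+a. (\<Sum>k. ennreal (f k a)) \<partial>lborel)"
    by (rule nn_integral_suminf[symmetric]) measurable
  also have "\<dots> = (\<integral>\<^sup>+a. ennreal (1 / Gamma \<nu>) * ennreal (indicator {0<..} a * a powr (\<nu> - 1) * exp (- (1 * a))) \<partial>lborel)"
    unfolding pt using GN by (intro nn_integral_cong) (simp add: ennreal_mult'[symmetric])
  also have "\<dots> = ennreal (1 / Gamma \<nu>) * ennreal (Gamma \<nu> / 1 powr \<nu>)"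
    using gamma_scaled[OF nu, of 1] by (subst nn_integral_cmult) auto
  also have "\<dots> = 1" using GN by (simp add: ennreal_mult'[symmetric])
  finally have S1: "(\<Sum>k. ennreal (alpha d \<nu> \<gamma> k)) = 1" .
  have nn: "alpha d \<nu> \<gamma> k \<ge> 0" for k using alpha_pos[OF d nu ga, of k] by simp
  have sm: "summable (\<lambda>k. alpha d \<nu> \<gamma> k)"
    by (rule summable_suminf_not_top[OF nn]) (simp add: S1)
  have "ennreal (\<Sum>k. alpha d \<nu> \<gamma> k) = 1" using suminf_ennreal2[OF nn sm] S1 by simp
  then have "(\<Sum>k. alpha d \<nu> \<gamma> k) = 1"
    using suminf_nonneg[OF sm nn] by (simp add: ennreal_eq_1)
  then show ?thesis using sm by (simp add: sums_iff)
qed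


lemma gauss_scale:
  fixes y :: "'a::euclidean_space" and c \<sigma> :: real
  assumes c: "c > 0" and s: "\<sigma> > 0"
  shows "(1 / c) ^ DIM('a) * gauss_density \<sigma> ((1 / c) *\<^sub>R y) = gauss_density (c * \<sigma>) y"
proof -
  have "(norm ((1 / c) *\<^sub>R y))\<^sup>2 / (2 * \<sigma>\<^sup>2) = (norm y)\<^sup>2 / (2 * (c * \<sigma>)\<^sup>2)"
    using c by (simp add: power_mult_distrib power_divide)
  then show ?thesis
    unfolding gauss_density_def using c s
    by (simp add: power_mult_distrib power_divide field_simps)
qed

lemma conv_distr:
  fixes M :: "'b measure" and X T :: "'b \<Rightarrow> 'a::euclidean_space" and \<nu> \<sigma> a1 a2 :: real
  assumes P: "prob_space M" and s: "\<sigma> > 0" and a1: "a1 > 0" and a2: "a2 > 0"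
    and dX: "distributed M lborel X (\<lambda>x. ennreal (gauss_density \<sigma> x))"
    and dT: "distributed M lborel T (\<lambda>t. ennreal (student_density \<nu> t))"
    and ind: "prob_space.indep_var M borel X borel T"
  shows "distributed M lborel (\<lambda>\<omega>. a1 *\<^sub>R X \<omega> + a2 *\<^sub>R T \<omega>)
     (\<lambda>z. \<integral>\<^sup>+t. ennreal (student_density \<nu> t) * ennreal (gauss_density (a1 * \<sigma>) (z - a2 *\<^sub>R t)) \<partial>lborel)"
proof -
  interpret prob_space M by (rule P)
  define fX where "fX = (\<lambda>x::'a. ennreal (gauss_density \<sigma> x))"
  define fT where "fT = (\<lambda>x::'a. ennreal (student_density \<nu> x))"
  define h where "h = (\<lambda>z::'a. \<integral>\<^sup>+t. ennreal (student_density \<nu> t) * ennreal (gauss_density (a1 * \<sigma>) (z - a2 *\<^sub>R t)) \<partial>lborel)"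
  have Xm[measurable]: "X \<in> measurable M borel" using dX by (simp add: distributed_def)
  have Tm[measurable]: "T \<in> measurable M borel" using dT by (simp add: distributed_def)
  have dXe: "distr M borel X = density lborel fX"
    using dX unfolding distributed_def fX_def by (metis distr_cong sets_lborel)
  have dTe: "distr M borel T = density lborel fT"
    using dT unfolding distributed_def fT_def by (metis distr_cong sets_lborel)
  have sfT: "sigma_finite_measure (density lborel fT)"
  proof -
    have "prob_space (distr M borel T)" by (rule prob_space_distr) simp
    then show ?thesis unfolding dTe by (simp add: prob_space_imp_sigma_finite)
  qed
  have J: "distr M (borel \<Otimes>\<^sub>M borel) (\<lambda>\<omega>. (X \<omega>, T \<omega>)) = density (lborel \<Otimes>\<^sub>M lborel) (\<lambda>(x, t). fX x * fT t)"
  proof -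
    have "distr M (borel \<Otimes>\<^sub>M borel) (\<lambda>\<omega>. (X \<omega>, T \<omega>)) = distr M borel X \<Otimes>\<^sub>M distr M borel T"
      using ind unfolding indep_var_distribution_eq by simp
    also have "\<dots> = density lborel fX \<Otimes>\<^sub>M density lborel fT" unfolding dXe dTe ..
    also have "\<dots> = density (lborel \<Otimes>\<^sub>M lborel) (\<lambda>(x, t). fX x * fT t)"
      by (rule pair_measure_density[OF _ _ lborel.sigma_finite_measure_axioms sfT]) (auto simp: fX_def fT_def)
    finally show ?thesis .
  qed
  have Z: "distr M lborel (\<lambda>\<omega>. a1 *\<^sub>R X \<omega> + a2 *\<^sub>R T \<omega>)
      = distr (distr M (borel \<Otimes>\<^sub>M borel) (\<lambda>\<omega>. (X \<omega>, T \<omega>))) lborel (\<lambda>(x, t). a1 *\<^sub>R x + a2 *\<^sub>R t)"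
    by (subst distr_distr) (auto simp: comp_def)
  have hm[measurable]: "h \<in> borel_measurable borel"
    unfolding h_def by measurable
  have main: "distr M lborel (\<lambda>\<omega>. a1 *\<^sub>R X \<omega> + a2 *\<^sub>R T \<omega>) = density lborel h"
  proof (rule measure_eqI)
    show "sets (distr M lborel (\<lambda>\<omega>. a1 *\<^sub>R X \<omega> + a2 *\<^sub>R T \<omega>)) = sets (density lborel h)" by simp
  next
    fix A assume "A \<in> sets (distr M lborel (\<lambda>\<omega>. a1 *\<^sub>R X \<omega> + a2 *\<^sub>R T \<omega>))"
    then have A[measurable]: "A \<in> sets borel" by simp
    have "emeasure (distr M lborel (\<lambda>\<omega>. a1 *\<^sub>R X \<omega> + a2 *\<^sub>R T \<omega>)) A
        = (\<integral>\<^sup>+p. indicator A ((\<lambda>(x, t). a1 *\<^sub>R x + a2 *\<^sub>R t) p) \<partial>density (lborel \<Otimes>\<^sub>M lborel) (\<lambda>(x, t). fX x * fT t))"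
      unfolding Z J
      apply (subst nn_integral_indicator[symmetric])
       apply simp
      apply (rule nn_integral_distr)
       apply (simp add: measurable_cong_sets[OF sets_density refl])
      apply simp
      done
    also have "\<dots> = (\<integral>\<^sup>+p. (\<lambda>(x, t). fX x * fT t * indicator A (a1 *\<^sub>R x + a2 *\<^sub>R t)) p \<partial>(lborel \<Otimes>\<^sub>M lborel))"
      by (subst nn_integral_density) (auto simp: fX_def fT_def split_beta' intro!: nn_integral_cong)
    also have "\<dots> = (\<integral>\<^sup>+x. \<integral>\<^sup>+t. fX x * fT t * indicator A (a1 *\<^sub>R x + a2 *\<^sub>R t) \<partial>lborel \<partial>lborel)"
      by (subst lborel.nn_integral_fst[symmetric]) (auto simp: fX_def fT_def)
    also have "\<dots> = (\<integral>\<^sup>+t. \<integral>\<^sup>+x. fX x * fT t * indicator A (a1 *\<^sub>R x + a2 *\<^sub>R t) \<partial>lborel \<partial>lborel)"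
      by (rule lborel_pair.Fubini'[symmetric]) (simp add: fX_def fT_def)
    also have "\<dots> = (\<integral>\<^sup>+t. \<integral>\<^sup>+z. fT t * ennreal (gauss_density (a1 * \<sigma>) (z - a2 *\<^sub>R t)) * indicator A z \<partial>lborel \<partial>lborel)"
    proof (rule nn_integral_cong)
      fix t :: 'a
      have "(\<integral>\<^sup>+x. fX x * fT t * indicator A (a1 *\<^sub>R x + a2 *\<^sub>R t) \<partial>lborel)
          = ennreal (\<bar>1 / a1\<bar> ^ DIM('a)) * (\<integral>\<^sup>+z. fX ((- (a2 / a1)) *\<^sub>R t + (1 / a1) *\<^sub>R z) * fT t
                 * indicator A (a1 *\<^sub>R ((- (a2 / a1)) *\<^sub>R t + (1 / a1) *\<^sub>R z) + a2 *\<^sub>R t) \<partial>lborel)"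
        using a1 by (intro nn_integral_affine_eucl) (auto simp: fX_def fT_def)
      also have "\<dots> = (\<integral>\<^sup>+z. ennreal (\<bar>1 / a1\<bar> ^ DIM('a)) * (fX ((- (a2 / a1)) *\<^sub>R t + (1 / a1) *\<^sub>R z) * fT t
                 * indicator A (a1 *\<^sub>R ((- (a2 / a1)) *\<^sub>R t + (1 / a1) *\<^sub>R z) + a2 *\<^sub>R t)) \<partial>lborel)"
        by (rule nn_integral_cmult[symmetric]) (auto simp: fX_def fT_def)
      also have "\<dots> = (\<integral>\<^sup>+z. fT t * ennreal (gauss_density (a1 * \<sigma>) (z - a2 *\<^sub>R t)) * indicator A z \<partial>lborel)"
      proof (intro nn_integral_cong)
        fix z :: 'a
        have e1: "(- (a2 / a1)) *\<^sub>R t + (1 / a1) *\<^sub>R z = (1 / a1) *\<^sub>R (z - a2 *\<^sub>R t)"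
          using a1 by (simp add: algebra_simps)
        have e2: "a1 *\<^sub>R ((1 / a1) *\<^sub>R (z - a2 *\<^sub>R t)) + a2 *\<^sub>R t = z" using a1 by simp
        have e3: "ennreal (\<bar>1 / a1\<bar> ^ DIM('a)) * fX ((1 / a1) *\<^sub>R (z - a2 *\<^sub>R t))
            = ennreal (gauss_density (a1 * \<sigma>) (z - a2 *\<^sub>R t))"
          unfolding fX_def using a1 s gauss_scale[OF a1 s, of "z - a2 *\<^sub>R t"]
          by (simp add: ennreal_mult'[symmetric])
        show "ennreal (\<bar>1 / a1\<bar> ^ DIM('a)) * (fX ((- (a2 / a1)) *\<^sub>R t + (1 / a1) *\<^sub>R z) * fT t
                 * indicator A (a1 *\<^sub>R ((- (a2 / a1)) *\<^sub>R t + (1 / a1) *\<^sub>R z) + a2 *\<^sub>R t))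
            = fT t * ennreal (gauss_density (a1 * \<sigma>) (z - a2 *\<^sub>R t)) * indicator A z"
          unfolding e1 e2 e3[symmetric] by (simp add: mult_ac)
      qed
      finally show "(\<integral>\<^sup>+x. fX x * fT t * indicator A (a1 *\<^sub>R x + a2 *\<^sub>R t) \<partial>lborel)
          = (\<integral>\<^sup>+z. fT t * ennreal (gauss_density (a1 * \<sigma>) (z - a2 *\<^sub>R t)) * indicator A z \<partial>lborel)" .
    qed
    also have "\<dots> = (\<integral>\<^sup>+z. \<integral>\<^sup>+t. fT t * ennreal (gauss_density (a1 * \<sigma>) (z - a2 *\<^sub>R t)) * indicator A z \<partial>lborel \<partial>lborel)"
      by (rule lborel_pair.Fubini') (simp add: fT_def)
    also have "\<dots> = (\<integral>\<^sup>+z. h z * indicator A z \<partial>lborel)"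
      unfolding h_def fT_def by (intro nn_integral_cong nn_integral_multc) auto
    also have "\<dots> = emeasure (density lborel h) A"
      by (rule emeasure_density[symmetric]) auto
    finally show "emeasure (distr M lborel (\<lambda>\<omega>. a1 *\<^sub>R X \<omega> + a2 *\<^sub>R T \<omega>)) A = emeasure (density lborel h) A" .
  qed
  show ?thesis unfolding distributed_def h_def[symmetric] using main hm by simp
qed


lemma density_total:
  assumes P: "prob_space M" and d: "distributed M lborel X f"
  shows "(\<integral>\<^sup>+x. f x \<partial>lborel) = 1"
proof -
  interpret prob_space M by (rule P)
  have Xm: "X \<in> measurable M lborel" using d by (simp add: distributed_def)
  have "prob_space (distr M lborel X)" by (rule prob_space_distr[OF Xm])
  then have "emeasure (distr M lborel X) (space lborel) = 1"
    by (metis prob_space.emeasure_space_1 space_distr)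
  then have "emeasure (density lborel f) UNIV = 1" using d by (simp add: distributed_def)
  then show ?thesis using d by (simp add: emeasure_density distributed_def)
qed

lemma gk_nonneg: "s > 0 \<Longrightarrow> gk k s (z::'a::euclidean_space) \<ge> 0"
  unfolding gk_def by (intro mult_nonneg_nonneg divide_nonneg_nonneg)
    (auto intro!: less_imp_le[OF Gamma_real_pos] add_nonneg_pos)

theorem proposition2:
  fixes M :: "'b measure" and X T :: "'b \<Rightarrow> 'a::euclidean_space"
    and \<nu> \<sigma> a1 a2 :: real
  assumes "prob_space M"
    and "\<nu> > 0" and "\<sigma> > 0" and "a1 > 0" and "a2 > 0"
    and "distributed M lborel X (\<lambda>x. ennreal (gauss_density \<sigma> x))"
    and "distributed M lborel T (\<lambda>t. ennreal (student_density \<nu> t))"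
    and "prob_space.indep_var M borel X borel T"
  shows "let \<gamma> = a2 / (\<sigma> * sqrt 2 * a1) in
           (\<forall>z::'a. summable (\<lambda>k. alpha DIM('a) \<nu> \<gamma> k * gk k (a1 * \<sigma>) z))
         \<and> distributed M lborel (\<lambda>\<omega>. a1 *\<^sub>R X \<omega> + a2 *\<^sub>R T \<omega>)
             (\<lambda>z. ennreal (\<Sum>k. alpha DIM('a) \<nu> \<gamma> k * gk k (a1 * \<sigma>) z))
         \<and> (\<forall>k. alpha DIM('a) \<nu> \<gamma> k > 0)
         \<and> (\<lambda>k. alpha DIM('a) \<nu> \<gamma> k) sums 1"
proof -
  note P = assms(1) and nu = assms(2) and s = assms(3) and a1 = assms(4) and a2 = assms(5)
    and dX = assms(6) and dT = assms(7) and ind = assms(8)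
  define \<gamma> where "\<gamma> = a2 / (\<sigma> * sqrt 2 * a1)"
  have ga: "\<gamma> > 0" using s a1 a2 by (simp add: \<gamma>_def)
  have ga': "\<gamma> = a2 / ((a1 * \<sigma>) * sqrt 2)" by (simp add: \<gamma>_def mult_ac)
  have s1: "a1 * \<sigma> > 0" using a1 s by simp
  have d: "DIM('a) > 0" by simp
  have oneX: "(\<integral>\<^sup>+x. ennreal (gauss_density \<sigma> (x::'a)) \<partial>lborel) = 1"
    by (rule density_total[OF P dX])
  have oneT: "(\<integral>\<^sup>+x. ennreal (student_density \<nu> (x::'a)) \<partial>lborel) = 1"
    by (rule density_total[OF P dT])
  have GI: "\<And>c. c > 0 \<Longrightarrow> (\<integral>\<^sup>+y. ennreal (exp (- c * (norm (y::'a))\<^sup>2)) \<partial>lborel) = ennreal (sqrt (pi / c) ^ DIM('a))"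
    by (rule gauss_int[OF s _ oneX])
  define h where "h = (\<lambda>z::'a. \<integral>\<^sup>+t. ennreal (student_density \<nu> t) * ennreal (gauss_density (a1 * \<sigma>) (z - a2 *\<^sub>R t)) \<partial>lborel)"
  have hser: "h z = (\<Sum>k. ennreal (alpha DIM('a) \<nu> \<gamma> k * gk k (a1 * \<sigma>) z))" for z
    unfolding h_def ga' by (rule h_series[OF nu s1 a2 GI])
  define K where "K = ((a1 * \<sigma>) * sqrt (2 * pi)) ^ DIM('a)"
  have K: "K > 0" using s1 by (simp add: K_def)
  have hfin: "h z < \<infinity>" for z
  proof -
    have "h z \<le> (\<integral>\<^sup>+t. ennreal (student_density \<nu> (t::'a)) * ennreal (1 / K) \<partial>lborel)"
      unfolding h_def
    proof (rule nn_integral_mono)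
      fix t :: 'a
      have "gauss_density (a1 * \<sigma>) (z - a2 *\<^sub>R t) \<le> 1 / K"
        unfolding gauss_density_def K_def using K[unfolded K_def]
        by (intro divide_right_mono) auto
      then show "ennreal (student_density \<nu> t) * ennreal (gauss_density (a1 * \<sigma>) (z - a2 *\<^sub>R t))
          \<le> ennreal (student_density \<nu> t) * ennreal (1 / K)"
        by (intro mult_left_mono ennreal_leI) auto
    qed
    also have "\<dots> = ennreal (1 / K)"
      by (subst nn_integral_multc) (auto simp: oneT)
    also have "\<dots> < \<infinity>" by simp
    finally show ?thesis .
  qed
  have nn: "alpha DIM('a) \<nu> \<gamma> k * gk k (a1 * \<sigma>) z \<ge> 0" for k and z :: 'a
    using alpha_pos[OF d nu ga, of k] gk_nonneg[OF s1, of k z] by simp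
  have sm: "summable (\<lambda>k. alpha DIM('a) \<nu> \<gamma> k * gk k (a1 * \<sigma>) z)" for z :: 'a
    using summable_suminf_not_top[OF nn] hfin[of z] unfolding hser by simp
  have heq: "h = (\<lambda>z::'a. ennreal (\<Sum>k. alpha DIM('a) \<nu> \<gamma> k * gk k (a1 * \<sigma>) z))"
    using suminf_ennreal2[OF nn sm] hser by (auto simp: fun_eq_iff)
  have dist: "distributed M lborel (\<lambda>\<omega>. a1 *\<^sub>R X \<omega> + a2 *\<^sub>R T \<omega>) h"
    unfolding h_def by (rule conv_distr[OF P s a1 a2 dX dT ind])
  show ?thesis
    unfolding Let_def \<gamma>_def[symmetric]
    using sm dist[unfolded heq] alpha_pos[OF d nu ga] alpha_sums[OF d nu ga] by auto
qed

end
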